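(* Let $m,h\in\mathbb N$ and let $\mathcal P_{m,h}$ be the class of functions on $\mathbb R^h$ of the form $$p(y_1,\dots,y_h)=b_1y_1^{e_1}+b_2y_2^{e_2}+\dots+b_hy_h^{e_h},$$ where $0=e_1<e_2<\dots<e_h$ are integers and $b_1,\dots,b_h\in\mathbb Z$ satisfy $|b_i|\le m$ for all $i$ and $(b_1,\dots,b_h)\ne(0,\dots,0)$. Let $\eta>1$ be transcendental. Then there exist constants $\delta>0$ and $\varepsilon>0$, depending only on $\eta,m,h$, such that $$|p(y_1,\dots,y_h)|\ge\varepsilon$$ for all $p\in\mathcal P_{m,h}$ and all $(y_1,\dots,y_h)\in\mathbb R^h$ satisfying $$\frac{y_j^{e_j}}{y_i^{e_i}}\in\Big[(\eta-\delta)^{e_j-e_i},(\eta+\delta)^{e_j-e_i}\Big]\qquad\text{for all }1\le i<j\le h$$ (here $e_1,\dots,e_h$ are the exponents of the particular $p$). *)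

theory Defs
  imports Complex_Main "HOL-Computational_Algebra.Polynomial"
begin

end

theory Submission
  imports Defs
begin

definition cfg :: "real \<Rightarrow> nat \<Rightarrow> real \<Rightarrow> nat set \<Rightarrow> (nat\<Rightarrow>nat) \<Rightarrow> (nat\<Rightarrow>int) \<Rightarrow> (nat\<Rightarrow>real) \<Rightarrow> nat \<Rightarrow> bool" where
"cfg \<eta> m \<delta> I g f r k \<longleftrightarrow> finite I \<and> k \<in> I \<and> g k = 0 \<and> inj_on g I \<and> (\<forall>i\<in>I. \<bar>f i\<bar> \<le> int m) \<and> f k \<noteq> 0 \<and>
   (\<forall>i\<in>I. r i \<in> {1/(\<eta>+\<delta>)^g i .. 1/(\<eta>-\<delta>)^g i})"

lemma val_nonzero:
  fixes \<eta> :: real and cs :: "int list"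
  assumes "\<eta> > 1" "\<not> algebraic \<eta>" "length cs = Suc D" "cs!0 \<noteq> 0"
  shows "(\<Sum>d<Suc D. of_int (cs!d) * (1/\<eta>^d)) \<noteq> 0"
proof
  assume z: "(\<Sum>d<Suc D. of_int (cs!d) * (1/\<eta>^d)) = 0"
  define q :: "real poly" where "q = (\<Sum>d<Suc D. monom (of_int (cs!d)) (D - d))"
  have "poly q \<eta> = (\<Sum>d<Suc D. of_int (cs!d) * \<eta>^(D-d))"
    by (simp add: q_def poly_sum poly_monom)
  also have "\<dots> = (\<Sum>d<Suc D. \<eta>^D * (of_int (cs!d) * (1/\<eta>^d)))"
    using assms(1) by (intro sum.cong refl) (simp add: power_diff)
  also have "\<dots> = \<eta>^D * (\<Sum>d<Suc D. of_int (cs!d) * (1/\<eta>^d))" by (rule sum_distrib_left[symmetric])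
  also have "\<dots> = 0" using z by simp
  finally have p0: "poly q \<eta> = 0" .
  have cq: "coeff q n = (\<Sum>d<Suc D. if D - d = n then of_int (cs!d) else 0)" for n
    by (simp add: q_def coeff_sum)
  have "coeff q D = (\<Sum>d<Suc D. if d = 0 then of_int (cs!d) else 0)"
    unfolding cq by (intro sum.cong refl) auto
  also have "\<dots> = of_int (cs!0)" by simp
  finally have "coeff q D \<noteq> 0" using assms(4) by simp
  hence "q \<noteq> 0" by auto
  moreover have "coeff q n \<in> \<int>" for n unfolding cq
    by (intro Ints_sum) auto
  ultimately have "algebraic \<eta>" using p0 by (intro algebraicI[of q]) auto
  thus False using assms(2) by simp
qed

lemma near_bound:
  fixes \<eta> :: real
  assumes eta: "\<eta> > 1" "\<not> algebraic \<eta>"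
  shows "\<exists>c>0. \<forall>\<^sub>F \<delta> in at_right 0. \<forall>I g f r k. cfg \<eta> m \<delta> I g f r k \<and> (\<forall>i\<in>I. g i \<le> D)
     \<longrightarrow> c \<le> \<bar>\<Sum>i\<in>I. of_int (f i) * r i\<bar>"
proof -
  define L where "L = {cs :: int list. length cs = Suc D \<and> set cs \<subseteq> {-int m..int m} \<and> cs!0 \<noteq> 0}"
  define val where "val cs = (\<Sum>d<Suc D. of_int (cs!d) * (1/\<eta>^d))" for cs :: "int list"
  have finL: "finite L"
    by (rule finite_subset[OF _ finite_lists_length_eq[of "{-int m..int m}" "Suc D"]]) (auto simp: L_def)
  define c0 where "c0 = Min (insert 1 ((\<lambda>cs. \<bar>val cs\<bar>) ` L))"
  have c0pos: "c0 > 0" unfolding c0_def using finL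
    by (subst Min_gr_iff) (auto simp: L_def val_def dest!: val_nonzero[OF eta])
  have c0le: "c0 \<le> \<bar>val cs\<bar>" if "cs \<in> L" for cs
    unfolding c0_def using finL that by (intro Min_le) auto
  define \<kappa> where "\<kappa> = c0 / (2 * (real m + 1) * (real D + 1))"
  have kpos: "\<kappa> > 0" using c0pos by (simp add: \<kappa>_def)
  have ev1: "\<forall>\<^sub>F \<delta> in at_right 0. \<forall>d\<in>{..D}. 1/(\<eta>-\<delta>)^d - 1/(\<eta>+\<delta>)^d < \<kappa>"
  proof (rule eventually_ball_finite, simp, intro ballI)
    fix d :: nat
    have "((\<lambda>\<delta>::real. 1/(\<eta>-\<delta>)^d - 1/(\<eta>+\<delta>)^d) \<longlongrightarrow> 1/(\<eta>-0)^d - 1/(\<eta>+0)^d) (at_right 0)"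
      using eta(1) by (intro tendsto_intros) auto
    hence "((\<lambda>\<delta>::real. 1/(\<eta>-\<delta>)^d - 1/(\<eta>+\<delta>)^d) \<longlongrightarrow> 0) (at_right 0)" by simp
    from order_tendstoD(2)[OF this kpos]
    show "\<forall>\<^sub>F \<delta> in at_right 0. 1/(\<eta>-\<delta>)^d - 1/(\<eta>+\<delta>)^d < \<kappa>" .
  qed
  have ev2: "\<forall>\<^sub>F \<delta> in at_right (0::real). \<delta> < \<eta> - 1"
    using eta(1) by (auto simp: eventually_at_right_field intro!: exI[of _ "\<eta> - 1"])
  have ev3: "\<forall>\<^sub>F \<delta> in at_right (0::real). 0 < \<delta>" by (rule eventually_at_right_less)
  show ?thesis
  proof (intro exI[of _ "c0/2"] conjI)
    show "c0/2 > 0" using c0pos by simp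
    show "\<forall>\<^sub>F \<delta> in at_right 0. \<forall>I g f r k. cfg \<eta> m \<delta> I g f r k \<and> (\<forall>i\<in>I. g i \<le> D)
     \<longrightarrow> c0/2 \<le> \<bar>\<Sum>i\<in>I. of_int (f i) * r i\<bar>"
      using ev1 ev2 ev3
    proof eventually_elim
      case (elim \<delta>)
      show ?case
      proof (intro allI impI, elim conjE)
        fix I g f r k
        assume cf: "cfg \<eta> m \<delta> I g f r k" and gD: "\<forall>i\<in>I. g i \<le> D"
        from cf have finI: "finite I" and kI: "k \<in> I" and gk: "g k = 0" and inj: "inj_on g I"
          and fb: "\<forall>i\<in>I. \<bar>f i\<bar> \<le> int m" and fk: "f k \<noteq> 0"
          and rb: "\<forall>i\<in>I. r i \<in> {1/(\<eta>+\<delta>)^g i .. 1/(\<eta>-\<delta>)^g i}"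
          unfolding cfg_def by auto
        define v where "v d = (\<Sum>i\<in>{i\<in>I. g i = d}. f i)" for d
        have vsing: "\<bar>v d\<bar> \<le> int m" for d
        proof (cases "\<exists>i\<in>I. g i = d")
          case True
          then obtain i where i: "i \<in> I" "g i = d" by auto
          hence e: "{i\<in>I. g i = d} = {i}" using inj by (auto simp: inj_on_def)
          show ?thesis unfolding v_def e using fb i by simp
        next
          case False
          hence e: "{i\<in>I. g i = d} = {}" by auto
          show ?thesis unfolding v_def e by simp
        qed
        have v0: "v 0 = f k"
        proof -
          have e: "{i\<in>I. g i = 0} = {k}" using inj kI gk by (auto simp: inj_on_def)
          show ?thesis unfolding v_def e by simp
        qed
        define cs where "cs = map v [0..<Suc D]"
        have csL: "cs \<in> L" unfolding L_def cs_def using vsing v0 fk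
          by (auto simp del: upt_Suc simp add: nth_Cons' abs_le_iff) (smt (verit) vsing)
        have vd: "of_int (v d) * (1/\<eta>^d) = (\<Sum>i\<in>I. if g i = d then of_int (f i) * (1/\<eta>^d) else 0)" for d
        proof -
          have "of_int (v d) * (1/\<eta>^d) = (\<Sum>i\<in>{i\<in>I. g i = d}. of_int (f i) * (1/\<eta>^d))"
            unfolding v_def of_int_sum sum_distrib_right ..
          also have "\<dots> = (\<Sum>i\<in>I. if g i = d then of_int (f i) * (1/\<eta>^d) else 0)"
            by (rule sum.inter_filter[OF finI])
          finally show ?thesis .
        qed
        have "val cs = (\<Sum>d<Suc D. \<Sum>i\<in>I. if g i = d then of_int (f i) * (1/\<eta>^d) else 0)"
          unfolding val_def cs_def using vd
          by (intro sum.cong refl) (simp del: upt_Suc)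
        also have "\<dots> = (\<Sum>i\<in>I. \<Sum>d<Suc D. if g i = d then of_int (f i) * (1/\<eta>^d) else 0)"
          by (rule sum.swap)
        also have "\<dots> = (\<Sum>i\<in>I. of_int (f i) * (1/\<eta>^g i))"
          using gD by (intro sum.cong refl) (auto simp: sum.delta' less_Suc_eq_le)
        finally have valeq: "val cs = (\<Sum>i\<in>I. of_int (f i) * (1/\<eta>^g i))" .
        have c0v: "c0 \<le> \<bar>val cs\<bar>" using c0le[OF csL] .
        have cardI: "card I \<le> Suc D"
          using card_inj_on_le[OF inj, of "{..D}"] gD by auto
        have termb: "\<bar>of_int (f i) * r i - of_int (f i) * (1/\<eta>^g i)\<bar> \<le> real m * \<kappa>" if i: "i \<in> I" for i
        proof -
          have pos: "0 < \<eta> - \<delta>" using elim eta by auto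
          have a1: "1/(\<eta>+\<delta>)^g i \<le> 1/\<eta>^g i"
            using elim eta by (intro divide_left_mono power_mono mult_pos_pos) auto
          have a2: "1/\<eta>^g i \<le> 1/(\<eta>-\<delta>)^g i"
            using elim eta pos by (intro divide_left_mono power_mono mult_pos_pos zero_less_power) auto
          have "\<bar>r i - 1/\<eta>^g i\<bar> \<le> 1/(\<eta>-\<delta>)^g i - 1/(\<eta>+\<delta>)^g i"
            using rb i a1 a2 by (auto simp: abs_le_iff)
          also have "\<dots> \<le> \<kappa>" using elim(1) gD i by (auto intro: less_imp_le)
          finally have rr: "\<bar>r i - 1/\<eta>^g i\<bar> \<le> \<kappa>" .
          have "\<bar>of_int (f i) * r i - of_int (f i) * (1/\<eta>^g i)\<bar> = \<bar>real_of_int (f i)\<bar> * \<bar>r i - 1/\<eta>^g i\<bar>"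
            by (simp add: abs_mult[symmetric] right_diff_distrib)
          also have "\<dots> \<le> real m * \<kappa>"
          proof -
            have "\<bar>f i\<bar> \<le> int m" using fb i by blast
            hence "real_of_int \<bar>f i\<bar> \<le> real_of_int (int m)" by (rule of_int_le_iff[THEN iffD2])
            hence "\<bar>real_of_int (f i)\<bar> \<le> real m" by simp
            thus ?thesis using rr kpos by (intro mult_mono) auto
          qed
          finally show ?thesis .
        qed
        have "\<bar>(\<Sum>i\<in>I. of_int (f i) * r i) - val cs\<bar> = \<bar>\<Sum>i\<in>I. of_int (f i) * r i - of_int (f i) * (1/\<eta>^g i)\<bar>"
          by (simp add: valeq sum_subtractf)
        also have "\<dots> \<le> (\<Sum>i\<in>I. real m * \<kappa>)"
          by (rule order_trans[OF sum_abs sum_mono]) (rule termb)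
        also have "\<dots> = real (card I) * real m * \<kappa>" by simp
        also have "\<dots> \<le> (real D + 1) * real m * \<kappa>"
          using cardI kpos by (intro mult_right_mono) auto
        also have "\<dots> = c0 * real m / (2 * (real m + 1))" by (simp add: \<kappa>_def)
        also have "\<dots> \<le> c0 / 2" using c0pos by (simp add: field_simps)
        finally show "c0/2 \<le> \<bar>\<Sum>i\<in>I. of_int (f i) * r i\<bar>" using c0v by linarith
      qed
    qed
  qed
qed


lemma cfg_subset:
  assumes "cfg \<eta> m \<delta> I g f r k" "J \<subseteq> I" "k \<in> J"
  shows "cfg \<eta> m \<delta> J g f r k"
  using assms unfolding cfg_def by (auto intro: finite_subset inj_on_subset)

lemma core_bound:
  fixes \<eta> :: real
  assumes eta: "\<eta> > 1" "\<not> algebraic \<eta>"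
  shows "\<exists>c>0. \<forall>\<^sub>F \<delta> in at_right 0. \<forall>I g f r k. cfg \<eta> m \<delta> I g f r k \<and> card I \<le> H \<and> card {i\<in>I. D < g i} \<le> n
     \<longrightarrow> c \<le> \<bar>\<Sum>i\<in>I. of_int (f i) * r i\<bar>"
proof (induction n arbitrary: D)
  case 0
  obtain c where c: "c > 0" and ev: "\<forall>\<^sub>F \<delta> in at_right 0. \<forall>I g f r k. cfg \<eta> m \<delta> I g f r k \<and> (\<forall>i\<in>I. g i \<le> D)
     \<longrightarrow> c \<le> \<bar>\<Sum>i\<in>I. of_int (f i) * r i\<bar>" using near_bound[OF eta, of m D] by blast
  show ?case
  proof (intro exI[of _ c] conjI c)
    show "\<forall>\<^sub>F \<delta> in at_right 0. \<forall>I g f r k. cfg \<eta> m \<delta> I g f r k \<and> card I \<le> H \<and> card {i\<in>I. D < g i} \<le> 0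
     \<longrightarrow> c \<le> \<bar>\<Sum>i\<in>I. of_int (f i) * r i\<bar>"
      using ev
    proof eventually_elim
      case (elim \<delta>)
      show ?case
      proof (intro allI impI, elim conjE)
        fix I g f r k
        assume cf: "cfg \<eta> m \<delta> I g f r k" and "card {i\<in>I. D < g i} \<le> 0"
        moreover have "finite I" using cf by (simp add: cfg_def)
        ultimately have "\<forall>i\<in>I. g i \<le> D" by auto
        thus "c \<le> \<bar>\<Sum>i\<in>I. of_int (f i) * r i\<bar>" using elim cf by blast
      qed
    qed
  qed
next
  case (Suc n)
  obtain c1 where c1: "c1 > 0" and ev1: "\<forall>\<^sub>F \<delta> in at_right 0. \<forall>I g f r k. cfg \<eta> m \<delta> I g f r k \<and> (\<forall>i\<in>I. g i \<le> D)
     \<longrightarrow> c1 \<le> \<bar>\<Sum>i\<in>I. of_int (f i) * r i\<bar>" using near_bound[OF eta, of m D] by blast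
  define u0 where "u0 = 2 / (\<eta> + 1)"
  have u0: "0 < u0" "u0 < 1" using eta(1) by (auto simp: u0_def)
  define \<kappa> where "\<kappa> = c1 / (2 * (real H * real m + 1))"
  have hm: "0 \<le> real H * real m" by simp
  have hm2: "0 < 2 * (real H * real m + 1)" using hm by (smt (verit))
  have kpos: "\<kappa> > 0" unfolding \<kappa>_def by (rule divide_pos_pos[OF c1 hm2])
  have "\<forall>\<^sub>F N in sequentially. u0 ^ N < \<kappa> \<and> D < N"
    using order_tendstoD(2)[OF LIMSEQ_power_zero[of u0] kpos] u0 eventually_gt_at_top[of D]
    by (auto intro: eventually_conj)
  then obtain D' where D': "u0 ^ D' < \<kappa>" "D < D'" by (auto simp: eventually_sequentially)
  obtain c2 where c2: "c2 > 0" and ev2: "\<forall>\<^sub>F \<delta> in at_right 0. \<forall>I g f r k. cfg \<eta> m \<delta> I g f r k \<and> card I \<le> H \<and> card {i\<in>I. D' < g i} \<le> n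
     \<longrightarrow> c2 \<le> \<bar>\<Sum>i\<in>I. of_int (f i) * r i\<bar>" using Suc.IH[of D'] by blast
  have ev3: "\<forall>\<^sub>F \<delta> in at_right (0::real). \<delta> < (\<eta> - 1) / 2"
    using eta(1) by (auto simp: eventually_at_right_field intro!: exI[of _ "(\<eta> - 1)/2"])
  have ev4: "\<forall>\<^sub>F \<delta> in at_right (0::real). 0 < \<delta>" by (rule eventually_at_right_less)
  show ?case
  proof (intro exI[of _ "min (c1/2) c2"] conjI)
    show "min (c1/2) c2 > 0" using c1 c2 by simp
    show "\<forall>\<^sub>F \<delta> in at_right 0. \<forall>I g f r k. cfg \<eta> m \<delta> I g f r k \<and> card I \<le> H \<and> card {i\<in>I. D < g i} \<le> Suc n
     \<longrightarrow> min (c1/2) c2 \<le> \<bar>\<Sum>i\<in>I. of_int (f i) * r i\<bar>"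
      using ev1 ev2 ev3 ev4
    proof eventually_elim
      case (elim \<delta>)
      show ?case
      proof (intro allI impI, elim conjE)
        fix I g f r k
        assume cf: "cfg \<eta> m \<delta> I g f r k" and cH: "card I \<le> H" and cn: "card {i\<in>I. D < g i} \<le> Suc n"
        from cf have finI: "finite I" and kI: "k \<in> I" and gk: "g k = 0"
          and fb: "\<forall>i\<in>I. \<bar>f i\<bar> \<le> int m"
          and rb: "\<forall>i\<in>I. r i \<in> {1/(\<eta>+\<delta>)^g i .. 1/(\<eta>-\<delta>)^g i}"
          unfolding cfg_def by auto
        show "min (c1/2) c2 \<le> \<bar>\<Sum>i\<in>I. of_int (f i) * r i\<bar>"
        proof (cases "\<exists>i\<in>I. D < g i \<and> g i \<le> D'")
          case True
          then obtain i0 where i0: "i0 \<in> I" "D < g i0" "g i0 \<le> D'" by auto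
          have "i0 \<in> {i\<in>I. D < g i}" "i0 \<notin> {i\<in>I. D' < g i}" using i0 by auto
          hence "{i\<in>I. D' < g i} \<subset> {i\<in>I. D < g i}" using D' by (auto simp del: mem_Collect_eq)
          hence "card {i\<in>I. D' < g i} < card {i\<in>I. D < g i}"
            using finI by (intro psubset_card_mono) auto
          hence "card {i\<in>I. D' < g i} \<le> n" using cn by linarith
          hence "c2 \<le> \<bar>\<Sum>i\<in>I. of_int (f i) * r i\<bar>" using elim(2) cf cH by blast
          thus ?thesis by linarith
        next
          case False
          define N where "N = {i\<in>I. g i \<le> D}"
          have NI: "N \<subseteq> I" and kN: "k \<in> N" using kI gk by (auto simp: N_def)
          have cfN: "cfg \<eta> m \<delta> N g f r k" by (rule cfg_subset[OF cf NI kN])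
          have nearb: "c1 \<le> \<bar>\<Sum>i\<in>N. of_int (f i) * r i\<bar>" 
            using elim(1) cfN unfolding N_def by blast
          have split: "(\<Sum>i\<in>I. of_int (f i) * r i) = (\<Sum>i\<in>I - N. of_int (f i) * r i) + (\<Sum>i\<in>N. of_int (f i) * r i)"
            by (rule sum.subset_diff[OF NI finI])
          have far: "D' < g i" if "i \<in> I - N" for i using that False by (auto simp: N_def)
          have pos: "(\<eta> + 1) / 2 < \<eta> - \<delta>" using elim(3) by simp
          have termb: "\<bar>of_int (f i) * r i\<bar> \<le> real m * u0 ^ D'" if i: "i \<in> I - N" for i
          proof -
            have fi: "\<bar>real_of_int (f i)\<bar> \<le> real m"
            proof -
              have "\<bar>f i\<bar> \<le> int m" using fb i by blast
              hence "real_of_int \<bar>f i\<bar> \<le> real_of_int (int m)" by (rule of_int_le_iff[THEN iffD2])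
              thus ?thesis by simp
            qed
            have r0: "0 \<le> r i" using rb i elim(4) eta(1)
              by (auto intro: order_trans[rotated])
            have "r i \<le> 1/(\<eta>-\<delta>)^g i" using rb i by auto
            also have "\<dots> = (1/(\<eta>-\<delta>))^g i" by (simp add: power_one_over)
            also have "\<dots> \<le> u0 ^ g i"
            proof (rule power_mono)
              show "1/(\<eta>-\<delta>) \<le> u0" unfolding u0_def using pos eta(1)
                by (simp add: field_simps)
              show "0 \<le> 1/(\<eta>-\<delta>)" using pos eta(1) by simp
            qed
            also have "\<dots> \<le> u0 ^ D'" using far[OF i] u0 by (intro power_decreasing) auto
            finally have "\<bar>r i\<bar> \<le> u0 ^ D'" using r0 by simp
            thus ?thesis using fi by (simp add: abs_mult mult_mono)
          qed
          have "\<bar>\<Sum>i\<in>I - N. of_int (f i) * r i\<bar> \<le> (\<Sum>i\<in>I - N. real m * u0 ^ D')"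
            by (rule order_trans[OF sum_abs sum_mono]) (rule termb)
          also have "\<dots> = real (card (I - N)) * (real m * u0 ^ D')" by simp
          also have "\<dots> \<le> real H * (real m * u0 ^ D')"
          proof (rule mult_right_mono)
            have "card (I - N) \<le> card I" using finI by (intro card_mono) auto
            thus "real (card (I - N)) \<le> real H" using cH by simp
            show "0 \<le> real m * u0 ^ D'" using u0 by simp
          qed
          also have "\<dots> \<le> real H * (real m * \<kappa>)"
            using D' by (intro mult_left_mono) auto
          also have "\<dots> = c1 * (real H * real m) / (2 * (real H * real m + 1))" by (simp add: \<kappa>_def)
          also have "\<dots> \<le> c1 * (real H * real m + 1) / (2 * (real H * real m + 1))"
            using c1 hm2 by (intro divide_right_mono mult_left_mono) auto
          also have "\<dots> = c1 / 2" using hm2 by (simp add: field_simps)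
          finally have "\<bar>\<Sum>i\<in>I - N. of_int (f i) * r i\<bar> \<le> c1 / 2" .
          hence "c1 / 2 \<le> \<bar>\<Sum>i\<in>I. of_int (f i) * r i\<bar>" using split nearb by linarith
          thus ?thesis by linarith
        qed
      qed
    qed
  qed
qed


theorem lemma2p1:
  fixes m h :: nat and \<eta> :: real
  assumes "\<eta> > 1" and "\<not> algebraic \<eta>"
  shows "\<exists>\<delta>>0. \<exists>\<epsilon>>0. \<forall>(e :: nat \<Rightarrow> nat) (b :: nat \<Rightarrow> int) (y :: nat \<Rightarrow> real).
      e 1 = 0 \<longrightarrow>
      (\<forall>i j. 1 \<le> i \<longrightarrow> i < j \<longrightarrow> j \<le> h \<longrightarrow> e i < e j) \<longrightarrow>
      (\<forall>i\<in>{1..h}. \<bar>b i\<bar> \<le> int m) \<longrightarrow>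
      (\<exists>i\<in>{1..h}. b i \<noteq> 0) \<longrightarrow>
      (\<forall>i j. 1 \<le> i \<longrightarrow> i < j \<longrightarrow> j \<le> h \<longrightarrow>
          y j ^ e j / y i ^ e i \<in> {(\<eta> - \<delta>) ^ (e j - e i) .. (\<eta> + \<delta>) ^ (e j - e i)}) \<longrightarrow>
      \<epsilon> \<le> \<bar>\<Sum>i=1..h. of_int (b i) * y i ^ e i\<bar>"
proof -
  note eta = assms
  obtain c where c: "c > 0" and ev: "\<forall>\<^sub>F \<delta> in at_right 0. \<forall>I g f r k. cfg \<eta> m \<delta> I g f r k \<and> card I \<le> h \<and> card {i\<in>I. 0 < g i} \<le> h
     \<longrightarrow> c \<le> \<bar>\<Sum>i\<in>I. of_int (f i) * r i\<bar>"
    using core_bound[OF eta, of m h 0 h] by blast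
  have ev2: "\<forall>\<^sub>F \<delta> in at_right (0::real). \<delta> < \<eta> - 1"
    using eta(1) by (auto simp: eventually_at_right_field intro!: exI[of _ "\<eta> - 1"])
  have "\<forall>\<^sub>F \<delta> in at_right (0::real). (\<forall>I g f r k. cfg \<eta> m \<delta> I g f r k \<and> card I \<le> h \<and> card {i\<in>I. 0 < g i} \<le> h
     \<longrightarrow> c \<le> \<bar>\<Sum>i\<in>I. of_int (f i) * r i\<bar>) \<and> \<delta> < \<eta> - 1"
    using ev ev2 by (rule eventually_conj)
  then obtain B where B: "B > 0" and BP: "\<And>z. z > 0 \<Longrightarrow> z < B \<Longrightarrow> (\<forall>I g f r k. cfg \<eta> m z I g f r k \<and> card I \<le> h \<and> card {i\<in>I. 0 < g i} \<le> h
     \<longrightarrow> c \<le> \<bar>\<Sum>i\<in>I. of_int (f i) * r i\<bar>) \<and> z < \<eta> - 1"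
    unfolding eventually_at_right_field by blast
  define \<delta> where "\<delta> = B / 2"
  have dpos: "\<delta> > 0" and dP: "\<forall>I g f r k. cfg \<eta> m \<delta> I g f r k \<and> card I \<le> h \<and> card {i\<in>I. 0 < g i} \<le> h
     \<longrightarrow> c \<le> \<bar>\<Sum>i\<in>I. of_int (f i) * r i\<bar>" and dlt: "\<delta> < \<eta> - 1"
  proof -
    have "\<delta> > 0" "\<delta> < B" using B by (auto simp: \<delta>_def)
    thus "\<delta> > 0" "\<forall>I g f r k. cfg \<eta> m \<delta> I g f r k \<and> card I \<le> h \<and> card {i\<in>I. 0 < g i} \<le> h
     \<longrightarrow> c \<le> \<bar>\<Sum>i\<in>I. of_int (f i) * r i\<bar>" "\<delta> < \<eta> - 1"
      using BP[of \<delta>] by blast+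
  qed
  show ?thesis
  proof (rule exI[of _ \<delta>], intro conjI dpos, rule exI[of _ c], intro conjI c allI impI)
    fix e :: "nat \<Rightarrow> nat" and b :: "nat \<Rightarrow> int" and y :: "nat \<Rightarrow> real"
    assume e1: "e 1 = 0"
      and emono: "\<forall>i j. 1 \<le> i \<longrightarrow> i < j \<longrightarrow> j \<le> h \<longrightarrow> e i < e j"
      and bb: "\<forall>i\<in>{1..h}. \<bar>b i\<bar> \<le> int m"
      and bnz: "\<exists>i\<in>{1..h}. b i \<noteq> 0"
      and yr: "\<forall>i j. 1 \<le> i \<longrightarrow> i < j \<longrightarrow> j \<le> h \<longrightarrow>
          y j ^ e j / y i ^ e i \<in> {(\<eta> - \<delta>) ^ (e j - e i) .. (\<eta> + \<delta>) ^ (e j - e i)}"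
    define x where "x i = y i ^ e i" for i
    define S where "S = {i\<in>{1..h}. b i \<noteq> 0}"
    have finS: "finite S" and neS: "S \<noteq> {}" using bnz by (auto simp: S_def)
    define k where "k = Max S"
    have kS: "k \<in> S" unfolding k_def using finS neS by (rule Max_in)
    hence k1: "1 \<le> k" and kh: "k \<le> h" and bk: "b k \<noteq> 0" by (auto simp: S_def)
    have bzero: "b i = 0" if "i \<in> {1..h}" "k < i" for i
    proof (rule ccontr)
      assume "b i \<noteq> 0"
      hence "i \<in> S" using that by (auto simp: S_def)
      hence "i \<le> k" unfolding k_def using finS by simp
      thus False using that by simp
    qed
    have ele: "e i \<le> e k" if "i \<in> {1..k}" for i
      using that emono kh by (cases "i = k") (auto intro: less_imp_le)
    have eta\<delta>: "1 < \<eta> - \<delta>" using dlt by simp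
    have xk: "1 \<le> x k"
    proof (cases "k = 1")
      case True thus ?thesis using e1 by (simp add: x_def)
    next
      case False
      hence "x k / x 1 \<in> {(\<eta> - \<delta>) ^ (e k - e 1) .. (\<eta> + \<delta>) ^ (e k - e 1)}"
        using yr k1 kh unfolding x_def by auto
      hence "(\<eta> - \<delta>) ^ e k \<le> x k" using e1 by (simp add: x_def)
      moreover have "1 \<le> (\<eta> - \<delta>) ^ e k" using eta\<delta> by (intro one_le_power) simp
      ultimately show ?thesis by simp
    qed
    define I where "I = {1..k}"
    define g where "g i = e k - e i" for i
    define r where "r i = x i / x k" for i
    have cf: "cfg \<eta> m \<delta> I g b r k"
      unfolding cfg_def
    proof (intro conjI)
      show "finite I" "k \<in> I" "g k = 0" "b k \<noteq> 0" using k1 bk by (auto simp: I_def g_def)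
      show "inj_on g I"
      proof (rule inj_onI)
        fix i j assume ij: "i \<in> I" "j \<in> I" "g i = g j"
        moreover have "e i \<le> e k" "e j \<le> e k" using ij ele by (auto simp: I_def)
        ultimately have "e i = e j" by (simp add: g_def)
        show "i = j"
        proof (rule ccontr)
          assume "i \<noteq> j"
          hence "i < j \<or> j < i" by auto
          moreover have "1 \<le> i" "1 \<le> j" "i \<le> h" "j \<le> h" using ij kh by (auto simp: I_def)
          ultimately have "e i < e j \<or> e j < e i" using emono by blast
          thus False using \<open>e i = e j\<close> by simp
        qed
      qed
      show "\<forall>i\<in>I. \<bar>b i\<bar> \<le> int m" using bb kh by (auto simp: I_def)
      show "\<forall>i\<in>I. r i \<in> {1/(\<eta>+\<delta>)^g i .. 1/(\<eta>-\<delta>)^g i}"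
      proof
        fix i assume iI: "i \<in> I"
        show "r i \<in> {1/(\<eta>+\<delta>)^g i .. 1/(\<eta>-\<delta>)^g i}"
        proof (cases "i = k")
          case True thus ?thesis using xk by (simp add: r_def g_def)
        next
          case False
          hence ik: "1 \<le> i" "i < k" using iI by (auto simp: I_def)
          hence q: "x k / x i \<in> {(\<eta> - \<delta>) ^ g i .. (\<eta> + \<delta>) ^ g i}"
            using yr kh unfolding x_def g_def by auto
          have p1: "0 < (\<eta> - \<delta>) ^ g i" using eta\<delta> by simp
          have qpos: "0 < x k / x i" using q p1 by auto
          have ri: "r i = 1 / (x k / x i)" by (simp add: r_def)
          have p2: "0 < (\<eta> + \<delta>) ^ g i" using eta\<delta> dpos by simp
          have "1/(\<eta>+\<delta>)^g i \<le> 1 / (x k / x i)"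
            by (rule divide_left_mono) (use q in simp, simp, rule mult_pos_pos[OF p2 qpos])
          moreover have "1 / (x k / x i) \<le> 1/(\<eta>-\<delta>)^g i"
            by (rule divide_left_mono) (use q in simp, simp, rule mult_pos_pos[OF qpos p1])
          ultimately show ?thesis using ri by simp
        qed
      qed
    qed
    have "card I \<le> h" using kh by (simp add: I_def)
    moreover have "card {i\<in>I. 0 < g i} \<le> card I"
      by (rule card_mono) (auto simp: I_def)
    hence "card {i\<in>I. 0 < g i} \<le> h" using kh by (simp add: I_def)
    ultimately have main: "c \<le> \<bar>\<Sum>i\<in>I. of_int (b i) * r i\<bar>" using dP cf by blast
    have "(\<Sum>i=1..h. of_int (b i) * y i ^ e i) = (\<Sum>i\<in>I. of_int (b i) * x i)"
      unfolding x_def I_def using kh bzero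
      by (intro sum.mono_neutral_right) auto
    also have "\<dots> = (\<Sum>i\<in>I. x k * (of_int (b i) * r i))"
      using xk by (intro sum.cong refl) (simp add: r_def)
    also have "\<dots> = x k * (\<Sum>i\<in>I. of_int (b i) * r i)" by (simp add: sum_distrib_left)
    finally have "\<bar>\<Sum>i=1..h. of_int (b i) * y i ^ e i\<bar> = x k * \<bar>\<Sum>i\<in>I. of_int (b i) * r i\<bar>"
      using xk by (simp add: abs_mult)
    moreover have "1 * \<bar>\<Sum>i\<in>I. of_int (b i) * r i\<bar> \<le> x k * \<bar>\<Sum>i\<in>I. of_int (b i) * r i\<bar>"
      by (rule mult_right_mono[OF xk abs_ge_zero])
    ultimately show "c \<le> \<bar>\<Sum>i=1..h. of_int (b i) * y i ^ e i\<bar>" using main by linarith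
  qed
qed

end
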